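(* Let $B$ be a board and $S$ a set of sinks such that every region of $B$ contains a sink, and let $T$ be a minimum-weight arborescence (converging to the root $r$) of the extended large tilt graph $\hat G_L(B,S)$. If $T$ contains two distinct inverse edges $(p_1,q)$ and $(p_2,q)$ with common head $q$, then $q$ is a sink.
   Context: Pixels are unit squares indexed by $\mathbb{Z}^2$. A board $B=(V,E)$ is a finite subgraph of the square grid graph on $\mathbb{Z}^2$; regions are its connected components; its boundary consists of pixel sides not shared with a neighbouring pixel joined by an edge of $E$. $S\subseteq V$ are sinks. For a pixel $p$, its row (column) segment is the maximal set of pixels reachable from $p$ using only horizontal (vertical) edges of $E$; $p^\ell,p^r$ are the leftmost/rightmost pixels of its row segment and $p^u,p^d$ the topmost/bottommost pixels of its column segment. The full tilt graph $G_F(B)$ has vertex set $V$ and edges $(p,p^x)$ for $x\in\{\ell,r,u,d\}$, $p^x\ne p$. A corner pixel is a pixel $p$ with $p=p^x=p^y$ for some $x\in\{\ell,r\}$, $y\in\{u,d\}$. The large tilt graph $G_L(B,S)$ is the subgraph of $G_F(B)$ induced by the vertex set consisting of (i) all pixels reachable in $G_F(B)$ from corner pixels, (ii) every sink $s$ and $s^\ell,s^r,s^u,s^d$, (iii) for every reflex corner of the boundary, the endpoints of the row and column segments of the pixels incident to that corner, (iv) all pixels on the intersection of a row segment and a column segment each containing a pixel included in (i)–(iii). Extended graph: for a directed graph $G$ with sinks $S$, $\hat G$ has vertex set $V(G)\cup\{r\}$ with new root $r$ and edges: every edge of $G$ with weight $0$; for every edge $(p,q)$ of $G$ such that $(q,p)$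 is not an edge of $G$, the inverse edge $(q,p)$ with weight $1$; and $(s,r)$ with weight $0$ for each $s\in S$. An arborescence converging to $r$ is a spanning subgraph in which every vertex other than $r$ has exactly one outgoing edge and a directed path to $r$; its weight is the sum of its edge weights. *)

theory Defs
  imports Main
begin

type_synonym pixel = "int \<times> int"

text \<open>Pixel (x,y) is the unit square [x,x+1] x [y,y+1]; "up" means larger y.\<close>

definition grid_adj :: "pixel \<Rightarrow> pixel \<Rightarrow> bool" where
  "grid_adj p q \<longleftrightarrow> \<bar>fst p - fst q\<bar> + \<bar>snd p - snd q\<bar> = 1"

definition board :: "pixel set \<Rightarrow> pixel set set \<Rightarrow> bool" where
  "board V E \<longleftrightarrow> finite V \<and>
     (\<forall>e\<in>E. \<exists>p q. e = {p, q} \<and> p \<in> V \<and> q \<in> V \<and> grid_adj p q)"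

definition edge_rel :: "pixel set set \<Rightarrow> (pixel \<times> pixel) set" where
  "edge_rel E = {(p, q). {p, q} \<in> E \<and> p \<noteq> q}"

definition every_region_has_sink :: "pixel set \<Rightarrow> pixel set set \<Rightarrow> pixel set \<Rightarrow> bool" where
  "every_region_has_sink V E S \<longleftrightarrow> (\<forall>p\<in>V. \<exists>s\<in>S. (p, s) \<in> (edge_rel E)\<^sup>*)"

definition hrel :: "pixel set set \<Rightarrow> (pixel \<times> pixel) set" where
  "hrel E = {(p, q). {p, q} \<in> E \<and> p \<noteq> q \<and> snd p = snd q}"

definition vrel :: "pixel set set \<Rightarrow> (pixel \<times> pixel) set" where
  "vrel E = {(p, q). {p, q} \<in> E \<and> p \<noteq> q \<and> fst p = fst q}"

definition rowseg :: "pixel set set \<Rightarrow> pixel \<Rightarrow> pixel set" where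
  "rowseg E p = {q. (p, q) \<in> (hrel E)\<^sup>*}"

definition colseg :: "pixel set set \<Rightarrow> pixel \<Rightarrow> pixel set" where
  "colseg E p = {q. (p, q) \<in> (vrel E)\<^sup>*}"

definition pl :: "pixel set set \<Rightarrow> pixel \<Rightarrow> pixel" where
  "pl E p = (THE q. q \<in> rowseg E p \<and> (\<forall>q'\<in>rowseg E p. fst q \<le> fst q'))"

definition pr :: "pixel set set \<Rightarrow> pixel \<Rightarrow> pixel" where
  "pr E p = (THE q. q \<in> rowseg E p \<and> (\<forall>q'\<in>rowseg E p. fst q' \<le> fst q))"

definition pu :: "pixel set set \<Rightarrow> pixel \<Rightarrow> pixel" where
  "pu E p = (THE q. q \<in> colseg E p \<and> (\<forall>q'\<in>colseg E p. snd q' \<le> snd q))"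

definition pd :: "pixel set set \<Rightarrow> pixel \<Rightarrow> pixel" where
  "pd E p = (THE q. q \<in> colseg E p \<and> (\<forall>q'\<in>colseg E p. snd q \<le> snd q'))"

definition seg_ends :: "pixel set set \<Rightarrow> pixel \<Rightarrow> pixel set" where
  "seg_ends E p = {pl E p, pr E p, pu E p, pd E p}"

definition full_tilt :: "pixel set \<Rightarrow> pixel set set \<Rightarrow> (pixel \<times> pixel) set" where
  "full_tilt V E = {(p, q). p \<in> V \<and> q \<in> seg_ends E p \<and> q \<noteq> p}"

definition corner_pixel :: "pixel set set \<Rightarrow> pixel \<Rightarrow> bool" where
  "corner_pixel E p \<longleftrightarrow> (p = pl E p \<or> p = pr E p) \<and> (p = pu E p \<or> p = pd E p)"

text \<open>Lattice point c = (i,j) is the common corner of pixels (i-1+dx, j-1+dy), dx,dy in {0,1}.\<close>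
definition quad :: "int \<times> int \<Rightarrow> int \<Rightarrow> int \<Rightarrow> pixel" where
  "quad c dx dy = (fst c - 1 + dx, snd c - 1 + dy)"

definition incident_pixels :: "pixel set \<Rightarrow> int \<times> int \<Rightarrow> pixel set" where
  "incident_pixels V c = {p \<in> V. \<exists>dx\<in>{0,1}. \<exists>dy\<in>{0,1}. p = quad c dx dy}"

text \<open>Reflex corner of the boundary at lattice point c: three of the four pixels around c
  lie in V and are joined around c by two edges (so the two sides between them at c are
  not boundary), while the fourth quadrant e is absent or joined to neither neighbour
  (so the two sides at c bounding e are boundary sides): interior angle 270 degrees.\<close>
definition reflex_corner :: "pixel set \<Rightarrow> pixel set set \<Rightarrow> int \<times> int \<Rightarrow> bool" where
  "reflex_corner V E c \<longleftrightarrow> (\<exists>dx\<in>{0,1}. \<exists>dy\<in>{0,1}.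
     let e = quad c dx dy; b = quad c (1 - dx) (1 - dy);
         a = quad c (1 - dx) dy; d = quad c dx (1 - dy) in
     a \<in> V \<and> b \<in> V \<and> d \<in> V \<and> {a, b} \<in> E \<and> {b, d} \<in> E \<and>
     (e \<notin> V \<or> ({a, e} \<notin> E \<and> {d, e} \<notin> E)))"

definition large_base :: "pixel set \<Rightarrow> pixel set set \<Rightarrow> pixel set \<Rightarrow> pixel set" where
  "large_base V E S =
     {q. \<exists>c\<in>V. corner_pixel E c \<and> (c, q) \<in> (full_tilt V E)\<^sup>*}
     \<union> (\<Union>s\<in>S. insert s (seg_ends E s))
     \<union> (\<Union>c\<in>{c. reflex_corner V E c}. \<Union>p\<in>incident_pixels V c. seg_ends E p)"

definition large_verts :: "pixel set \<Rightarrow> pixel set set \<Rightarrow> pixel set \<Rightarrow> pixel set" where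
  "large_verts V E S = large_base V E S \<union>
     {q. \<exists>a\<in>large_base V E S. \<exists>b\<in>large_base V E S. q \<in> rowseg E a \<inter> colseg E b}"

definition large_tilt :: "pixel set \<Rightarrow> pixel set set \<Rightarrow> pixel set \<Rightarrow> (pixel \<times> pixel) set" where
  "large_tilt V E S = {(p, q) \<in> full_tilt V E. p \<in> large_verts V E S \<and> q \<in> large_verts V E S}"

text \<open>Extended graph: vertices Some v for original vertices, None is the root r.\<close>
definition ext_verts :: "'a set \<Rightarrow> 'a option set" where
  "ext_verts W = insert None (Some ` W)"

definition ext_edges :: "('a \<times> 'a) set \<Rightarrow> 'a set \<Rightarrow> ('a option \<times> 'a option) set" where
  "ext_edges G S = {(Some p, Some q) | p q. (p, q) \<in> G}
     \<union> {(Some q, Some p) | p q. (p, q) \<in> G \<and> (q, p) \<notin> G}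
     \<union> {(Some s, None) | s. s \<in> S}"

definition inverse_edge :: "('a \<times> 'a) set \<Rightarrow> 'a option \<times> 'a option \<Rightarrow> bool" where
  "inverse_edge G e \<longleftrightarrow> (\<exists>p q. e = (Some q, Some p) \<and> (p, q) \<in> G \<and> (q, p) \<notin> G)"

definition ext_weight :: "('a \<times> 'a) set \<Rightarrow> 'a option \<times> 'a option \<Rightarrow> nat" where
  "ext_weight G e = (if inverse_edge G e then 1 else 0)"

definition arborescence :: "'a option set \<Rightarrow> ('a option \<times> 'a option) set \<Rightarrow> ('a option \<times> 'a option) set \<Rightarrow> bool" where
  "arborescence Vx Ed T \<longleftrightarrow> T \<subseteq> Ed \<and>
     (\<forall>v\<in>Vx - {None}. \<exists>!w. (v, w) \<in> T) \<and>
     (\<forall>v\<in>Vx. (v, None) \<in> T\<^sup>*)"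

definition tree_weight :: "('a \<times> 'a) set \<Rightarrow> ('a option \<times> 'a option) set \<Rightarrow> nat" where
  "tree_weight G T = (\<Sum>e\<in>T. ext_weight G e)"

definition min_arborescence :: "('a \<times> 'a) set \<Rightarrow> 'a set \<Rightarrow> 'a set \<Rightarrow> ('a option \<times> 'a option) set \<Rightarrow> bool" where
  "min_arborescence G W S T \<longleftrightarrow>
     arborescence (ext_verts W) (ext_edges G S) T \<and>
     (\<forall>T'. arborescence (ext_verts W) (ext_edges G S) T' \<longrightarrow> tree_weight G T \<le> tree_weight G T')"

end

theory Submission
  imports Defs
begin

lemma ext_edges_src:
  assumes "(x,y) \<in> ext_edges G S" "G \<subseteq> W \<times> W" "S \<subseteq> W"
  shows "x \<in> Some ` W"
  using assms by (auto simp: ext_edges_def)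

lemma arb_fun:
  assumes "arborescence (ext_verts W) (ext_edges G S) T" "G \<subseteq> W \<times> W" "S \<subseteq> W"
    "(x,y) \<in> T" "(x,z) \<in> T"
  shows "y = z"
proof -
  have "x \<in> Some ` W" using assms ext_edges_src unfolding arborescence_def by blast
  hence "x \<in> ext_verts W - {None}" by (auto simp: ext_verts_def)
  thus ?thesis using assms unfolding arborescence_def by blast
qed

lemma arb_None:
  assumes "arborescence (ext_verts W) (ext_edges G S) T"
  shows "(None, y) \<notin> T"
  using assms by (auto simp: arborescence_def ext_edges_def)

lemma arb_acyclic:
  assumes A: "arborescence (ext_verts W) (ext_edges G S) T" and G: "G \<subseteq> W \<times> W" "S \<subseteq> W"
  shows "(x,x) \<notin> T\<^sup>+"
proof
  assume xx: "(x,x) \<in> T\<^sup>+"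
  then obtain y where "(x,y) \<in> T" by (meson tranclD)
  hence "x \<in> Some ` W" using A G ext_edges_src unfolding arborescence_def by blast
  hence xN: "(x, None) \<in> T\<^sup>*" using A by (auto simp: arborescence_def ext_verts_def)
  have "\<And>z. (x,z) \<in> T\<^sup>* \<Longrightarrow> (z,x) \<in> T\<^sup>+"
  proof -
    fix z assume "(x,z) \<in> T\<^sup>*"
    thus "(z,x) \<in> T\<^sup>+"
    proof (induction rule: rtrancl_induct)
      case base thus ?case using xx .
    next
      case (step z z')
      from step.IH obtain m where m: "(z,m) \<in> T" "(m,x) \<in> T\<^sup>*" by (meson tranclD)
      have "m = z'" using arb_fun[OF A G m(1) step.hyps(2)] .
      thus ?case using m(2) xx by auto
    qed
  qed
  from this[OF xN] obtain m where "(None, m) \<in> T" by (meson tranclD)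
  thus False using arb_None[OF A] by blast
qed

lemma arb_finite:
  assumes "arborescence (ext_verts W) (ext_edges G S) T" "finite G" "finite S"
  shows "finite T"
proof -
  have "ext_edges G S \<subseteq> (\<lambda>(p,q). (Some p, Some q)) ` G \<union> (\<lambda>(p,q). (Some q, Some p)) ` G
     \<union> (\<lambda>s. (Some s, None)) ` S"
    by (auto simp: ext_edges_def image_iff)
  moreover have "finite ((\<lambda>(p,q). (Some p, Some q)) ` G \<union> (\<lambda>(p,q). (Some q, Some p)) ` G
     \<union> (\<lambda>s. (Some s, None)) ` S)" using assms(2,3) by auto
  ultimately show ?thesis using assms(1) unfolding arborescence_def by (meson finite_subset)
qed

lemma swap_false:
  assumes M: "min_arborescence G W S T" and G: "G \<subseteq> W \<times> W" "S \<subseteq> W"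
    and fin: "finite G" "finite S"
    and uv: "(u,v) \<in> T" and inv: "inverse_edge G (u,v)"
    and uv': "(u,v') \<in> ext_edges G S" and ninv: "\<not> inverse_edge G (u,v')"
    and nr: "(v',u) \<notin> T\<^sup>*"
  shows False
proof -
  have A: "arborescence (ext_verts W) (ext_edges G S) T" using M by (simp add: min_arborescence_def)
  define T' where "T' = insert (u,v') (T - {(u,v)})"
  have vv: "v \<noteq> v'" using inv ninv by auto
  have uW: "u \<in> Some ` W" using uv A G ext_edges_src unfolding arborescence_def by blast
  have sub: "T' \<subseteq> ext_edges G S" using A uv' by (auto simp: T'_def arborescence_def)
  have uniq: "\<forall>x\<in>ext_verts W - {None}. \<exists>!y. (x,y) \<in> T'"
  proof
    fix x assume x: "x \<in> ext_verts W - {None}"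
    show "\<exists>!y. (x,y) \<in> T'"
    proof (cases "x = u")
      case True
      have "(x,y) \<in> T' \<Longrightarrow> y = v'" for y
        using True arb_fun[OF A G uv] by (auto simp: T'_def)
      thus ?thesis using True by (auto simp: T'_def)
    next
      case False
      hence "(x,y) \<in> T' \<longleftrightarrow> (x,y) \<in> T" for y by (auto simp: T'_def)
      thus ?thesis using x A unfolding arborescence_def by simp
    qed
  qed
  have key: "(x,None) \<in> T'\<^sup>* \<or> (x,u) \<in> (T \<inter> T')\<^sup>*" if "(x,None) \<in> T\<^sup>*" for x
    using that
  proof (induction rule: converse_rtrancl_induct)
    case base thus ?case by simp
  next
    case (step x y)
    show ?case
    proof (cases "x = u")
      case True thus ?thesis by simp
    next
      case False
      hence xy: "(x,y) \<in> T \<inter> T'" using step.hyps(1) by (auto simp: T'_def)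
      from step.IH show ?thesis
      proof
        assume "(y,None) \<in> T'\<^sup>*" thus ?thesis using xy
          by (meson IntD2 converse_rtrancl_into_rtrancl)
      next
        assume "(y,u) \<in> (T \<inter> T')\<^sup>*" thus ?thesis using xy
          by (meson converse_rtrancl_into_rtrancl)
      qed
    qed
  qed
  have v'W: "v' \<in> ext_verts W"
    using uv' G by (auto simp: ext_edges_def ext_verts_def)
  have "(v', None) \<in> T'\<^sup>*"
  proof -
    have "(v',None) \<in> T\<^sup>*" using A v'W by (auto simp: arborescence_def)
    from key[OF this] show ?thesis
    proof
      assume "(v',u) \<in> (T \<inter> T')\<^sup>*"
      hence "(v',u) \<in> T\<^sup>*" by (meson Int_lower1 rtrancl_mono subsetD)
      thus ?thesis using nr by blast
    qed
  qed
  moreover have "(u,v') \<in> T'" by (simp add: T'_def)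
  ultimately have uN: "(u, None) \<in> T'\<^sup>*" by (meson converse_rtrancl_into_rtrancl)
  have reach: "\<forall>x\<in>ext_verts W. (x,None) \<in> T'\<^sup>*"
  proof
    fix x assume "x \<in> ext_verts W"
    hence "(x,None) \<in> T\<^sup>*" using A by (auto simp: arborescence_def)
    from key[OF this] show "(x,None) \<in> T'\<^sup>*"
    proof
      assume "(x,u) \<in> (T \<inter> T')\<^sup>*"
      hence "(x,u) \<in> T'\<^sup>*" by (meson Int_lower2 rtrancl_mono subsetD)
      thus ?thesis using uN by auto
    qed
  qed
  have A': "arborescence (ext_verts W) (ext_edges G S) T'"
    using sub uniq reach by (simp add: arborescence_def)
  have finT: "finite T" using arb_finite[OF A fin] .
  have nin: "(u,v') \<notin> T - {(u,v)}" using arb_fun[OF A G uv] vv by auto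
  have "tree_weight G T = ext_weight G (u,v) + (\<Sum>e\<in>T - {(u,v)}. ext_weight G e)"
    unfolding tree_weight_def using finT uv by (simp add: sum.remove)
  moreover have "tree_weight G T' = ext_weight G (u,v') + (\<Sum>e\<in>T - {(u,v)}. ext_weight G e)"
    unfolding tree_weight_def T'_def using finT nin by simp
  ultimately have "tree_weight G T' < tree_weight G T"
    using inv ninv by (simp add: ext_weight_def)
  moreover have "tree_weight G T \<le> tree_weight G T'" using M A' by (simp add: min_arborescence_def)
  ultimately show False by simp
qed


lemma hrel_sym: "(p,q) \<in> hrel E \<Longrightarrow> (q,p) \<in> hrel E"
  by (auto simp: hrel_def insert_commute)
lemma vrel_sym: "(p,q) \<in> vrel E \<Longrightarrow> (q,p) \<in> vrel E"
  by (auto simp: vrel_def insert_commute)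

lemma rtr_sym:
  assumes "\<And>p q. (p,q) \<in> R \<Longrightarrow> (q,p) \<in> R" "(p,q) \<in> R\<^sup>*"
  shows "(q,p) \<in> R\<^sup>*"
  using assms(2)
proof (induction rule: rtrancl_induct)
  case base then show ?case by simp
next
  case (step y z) thus ?case using assms(1) by (meson converse_rtrancl_into_rtrancl)
qed

lemma rowseg_same: "q \<in> rowseg E p \<Longrightarrow> rowseg E q = rowseg E p"
proof -
  assume "q \<in> rowseg E p"
  hence pq: "(p,q) \<in> (hrel E)\<^sup>*" by (simp add: rowseg_def)
  hence qp: "(q,p) \<in> (hrel E)\<^sup>*" using rtr_sym[of "hrel E", OF hrel_sym] by blast
  show ?thesis unfolding rowseg_def using pq qp by (auto intro: rtrancl_trans)
qed
lemma colseg_same: "q \<in> colseg E p \<Longrightarrow> colseg E q = colseg E p"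
proof -
  assume "q \<in> colseg E p"
  hence pq: "(p,q) \<in> (vrel E)\<^sup>*" by (simp add: colseg_def)
  hence qp: "(q,p) \<in> (vrel E)\<^sup>*" using rtr_sym[of "vrel E", OF vrel_sym] by blast
  show ?thesis unfolding colseg_def using pq qp by (auto intro: rtrancl_trans)
qed

lemma rowseg_self: "p \<in> rowseg E p" by (simp add: rowseg_def)
lemma colseg_self: "p \<in> colseg E p" by (simp add: colseg_def)

lemma rowseg_snd: "q \<in> rowseg E p \<Longrightarrow> snd q = snd p"
  unfolding rowseg_def mem_Collect_eq
  by (induction rule: rtrancl_induct) (auto simp: hrel_def)
lemma colseg_fst: "q \<in> colseg E p \<Longrightarrow> fst q = fst p"
  unfolding colseg_def mem_Collect_eq
  by (induction rule: rtrancl_induct) (auto simp: vrel_def)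

lemma board_edge: "board V E \<Longrightarrow> {q, r} \<in> E \<Longrightarrow> r \<in> V"
  unfolding board_def by (metis doubleton_eq_iff)

lemma rowseg_sub: "board V E \<Longrightarrow> rowseg E p \<subseteq> insert p V"
proof
  fix q assume b: "board V E" and "q \<in> rowseg E p"
  hence "(p,q) \<in> (hrel E)\<^sup>*" by (simp add: rowseg_def)
  thus "q \<in> insert p V"
    by (induction rule: rtrancl_induct) (auto simp: hrel_def intro: board_edge[OF b])
qed
lemma colseg_sub: "board V E \<Longrightarrow> colseg E p \<subseteq> insert p V"
proof
  fix q assume b: "board V E" and "q \<in> colseg E p"
  hence "(p,q) \<in> (vrel E)\<^sup>*" by (simp add: colseg_def)
  thus "q \<in> insert p V"
    by (induction rule: rtrancl_induct) (auto simp: vrel_def intro: board_edge[OF b])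
qed

lemma fin_board: "board V E \<Longrightarrow> finite V" by (simp add: board_def)

lemma the_min:
  fixes g :: "'a \<Rightarrow> int"
  assumes "finite A" "A \<noteq> {}" "inj_on g A"
  shows "(THE q. q \<in> A \<and> (\<forall>q'\<in>A. g q \<le> g q')) \<in> A \<and>
     (\<forall>q'\<in>A. g (THE q. q \<in> A \<and> (\<forall>q'\<in>A. g q \<le> g q')) \<le> g q')"
proof -
  obtain m where m: "m \<in> A" "\<forall>q'\<in>A. g m \<le> g q'"
  proof -
    have "Min (g ` A) \<in> g ` A" using assms(1,2) by simp
    then obtain m where "m \<in> A" "g m = Min (g ` A)" by auto
    thus ?thesis using that assms(1) by simp
  qed
  have "\<exists>!q. q \<in> A \<and> (\<forall>q'\<in>A. g q \<le> g q')"
  proof (rule ex1I[of _ m])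
    show "m \<in> A \<and> (\<forall>q'\<in>A. g m \<le> g q')" using m by simp
    fix y assume "y \<in> A \<and> (\<forall>q'\<in>A. g y \<le> g q')"
    hence "g y = g m" using m by force
    thus "y = m" using assms(3) m \<open>y \<in> A \<and> _\<close> by (meson inj_onD)
  qed
  from theI'[OF this] show ?thesis .
qed

lemma the_max:
  fixes g :: "'a \<Rightarrow> int"
  assumes "finite A" "A \<noteq> {}" "inj_on g A"
  shows "(THE q. q \<in> A \<and> (\<forall>q'\<in>A. g q' \<le> g q)) \<in> A \<and>
     (\<forall>q'\<in>A. g q' \<le> g (THE q. q \<in> A \<and> (\<forall>q'\<in>A. g q' \<le> g q)))"
proof -
  obtain m where m: "m \<in> A" "\<forall>q'\<in>A. g q' \<le> g m"
  proof -
    have "Max (g ` A) \<in> g ` A" using assms(1,2) by simp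
    then obtain m where "m \<in> A" "g m = Max (g ` A)" by auto
    thus ?thesis using that assms(1) by simp
  qed
  have "\<exists>!q. q \<in> A \<and> (\<forall>q'\<in>A. g q' \<le> g q)"
  proof (rule ex1I[of _ m])
    show "m \<in> A \<and> (\<forall>q'\<in>A. g q' \<le> g m)" using m by simp
    fix y assume "y \<in> A \<and> (\<forall>q'\<in>A. g q' \<le> g y)"
    hence "g y = g m" using m by force
    thus "y = m" using assms(3) m \<open>y \<in> A \<and> _\<close> by (meson inj_onD)
  qed
  from theI'[OF this] show ?thesis .
qed

lemma row_fin: "board V E \<Longrightarrow> finite (rowseg E p)"
  using rowseg_sub fin_board by (meson finite_insert finite_subset)
lemma col_fin: "board V E \<Longrightarrow> finite (colseg E p)"
  using colseg_sub fin_board by (meson finite_insert finite_subset)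
lemma row_inj: "inj_on fst (rowseg E p)"
  by (rule inj_onI) (metis prod_eq_iff rowseg_snd)
lemma col_inj: "inj_on snd (colseg E p)"
  by (rule inj_onI) (metis prod_eq_iff colseg_fst)

lemma pl_prop: "board V E \<Longrightarrow> pl E p \<in> rowseg E p \<and> (\<forall>q'\<in>rowseg E p. fst (pl E p) \<le> fst q')"
  unfolding pl_def using the_min[OF row_fin[of V E] _ row_inj] rowseg_self by blast
lemma pr_prop: "board V E \<Longrightarrow> pr E p \<in> rowseg E p \<and> (\<forall>q'\<in>rowseg E p. fst q' \<le> fst (pr E p))"
  unfolding pr_def using the_max[OF row_fin[of V E] _ row_inj] rowseg_self by blast
lemma pd_prop: "board V E \<Longrightarrow> pd E p \<in> colseg E p \<and> (\<forall>q'\<in>colseg E p. snd (pd E p) \<le> snd q')"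
  unfolding pd_def using the_min[OF col_fin[of V E] _ col_inj] colseg_self by blast
lemma pu_prop: "board V E \<Longrightarrow> pu E p \<in> colseg E p \<and> (\<forall>q'\<in>colseg E p. snd q' \<le> snd (pu E p))"
  unfolding pu_def using the_max[OF col_fin[of V E] _ col_inj] colseg_self by blast

lemma row_ends_same: "q \<in> rowseg E p \<Longrightarrow> pl E q = pl E p \<and> pr E q = pr E p"
  by (simp add: pl_def pr_def rowseg_same)
lemma col_ends_same: "q \<in> colseg E p \<Longrightarrow> pu E q = pu E p \<and> pd E q = pd E p"
  by (simp add: pu_def pd_def colseg_same)

lemma pl_eq_pr: assumes "board V E" "pl E p = pr E p" shows "p = pl E p"
proof -
  have "fst p = fst (pl E p)" using pl_prop[OF assms(1)] pr_prop[OF assms(1)] assms(2) rowseg_self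
    by (metis order_antisym)
  moreover have "snd p = snd (pl E p)" using pl_prop[OF assms(1)] rowseg_snd by metis
  ultimately show ?thesis by (simp add: prod_eq_iff)
qed
lemma pu_eq_pd: assumes "board V E" "pu E p = pd E p" shows "p = pu E p"
proof -
  have "snd p = snd (pu E p)" using pu_prop[OF assms(1)] pd_prop[OF assms(1)] assms(2) colseg_self
    by (metis order_antisym)
  moreover have "fst p = fst (pu E p)" using pu_prop[OF assms(1)] colseg_fst by metis
  ultimately show ?thesis by (simp add: prod_eq_iff)
qed

definition rowint where "rowint E b \<longleftrightarrow> b \<noteq> pl E b \<and> b \<noteq> pr E b"
definition colint where "colint E b \<longleftrightarrow> b \<noteq> pu E b \<and> b \<noteq> pd E b"

lemma lemA:
  assumes B: "board V E" and ba: "(b,a) \<in> full_tilt V E" and aV: "a \<in> V"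
    and nab: "(a,b) \<notin> full_tilt V E"
  shows "(a \<in> {pl E b, pr E b} \<and> rowint E b) \<or> (a \<in> {pu E b, pd E b} \<and> colint E b)"
proof -
  have ab: "a \<noteq> b" and a: "a \<in> seg_ends E b" using ba by (auto simp: full_tilt_def)
  have nb: "b \<notin> seg_ends E a" using nab aV ab by (auto simp: full_tilt_def)
  show ?thesis
  proof (cases "a \<in> {pl E b, pr E b}")
    case True
    hence "a \<in> rowseg E b" using pl_prop[OF B, of b, THEN conjunct1] pr_prop[OF B, of b, THEN conjunct1] by auto
    hence "pl E a = pl E b \<and> pr E a = pr E b" by (rule row_ends_same)
    hence "rowint E b" using nb True ab by (auto simp: seg_ends_def rowint_def)
    thus ?thesis using True by simp
  next
    case False
    hence F: "a \<in> {pu E b, pd E b}" using a by (auto simp: seg_ends_def)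
    hence "a \<in> colseg E b" using pu_prop[OF B, of b, THEN conjunct1] pd_prop[OF B, of b, THEN conjunct1] by auto
    hence "pu E a = pu E b \<and> pd E a = pd E b" by (rule col_ends_same)
    hence "colint E b" using nb F ab by (auto simp: seg_ends_def colint_def)
    thus ?thesis using F by simp
  qed
qed

lemma lemB_row:
  assumes B: "board V E" and bV: "b \<in> V" and "x \<in> {pl E b, pr E b}" "y \<in> {pl E b, pr E b}" "x \<noteq> y"
  shows "(x,y) \<in> full_tilt V E"
proof -
  have xr: "x \<in> rowseg E b" using assms(3) pl_prop[OF B, of b, THEN conjunct1] pr_prop[OF B, of b, THEN conjunct1] by auto
  hence "x \<in> V" using rowseg_sub[OF B, of b] bV by auto
  moreover have "pl E x = pl E b \<and> pr E x = pr E b" using xr by (rule row_ends_same)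
  ultimately show ?thesis using assms(4,5) by (auto simp: full_tilt_def seg_ends_def)
qed

lemma lemB_col:
  assumes B: "board V E" and bV: "b \<in> V" and "x \<in> {pu E b, pd E b}" "y \<in> {pu E b, pd E b}" "x \<noteq> y"
  shows "(x,y) \<in> full_tilt V E"
proof -
  have xr: "x \<in> colseg E b" using assms(3) pu_prop[OF B, of b, THEN conjunct1] pd_prop[OF B, of b, THEN conjunct1] by auto
  hence "x \<in> V" using colseg_sub[OF B, of b] bV by auto
  moreover have "pu E x = pu E b \<and> pd E x = pd E b" using xr by (rule col_ends_same)
  ultimately show ?thesis using assms(4,5) by (auto simp: full_tilt_def seg_ends_def)
qed

lemma lemC:
  assumes B: "board V E" and "rowint E b" "colint E b" "b \<in> seg_ends E w"
  shows False
proof -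
  consider "b = pl E w" | "b = pr E w" | "b = pu E w" | "b = pd E w"
    using assms(4) by (auto simp: seg_ends_def)
  thus False
  proof cases
    case 1
    hence "b \<in> rowseg E w" using pl_prop[OF B, of w, THEN conjunct1] by metis
    thus False using row_ends_same[of b E w] 1 assms(2) by (simp add: rowint_def)
  next
    case 2
    hence "b \<in> rowseg E w" using pr_prop[OF B, of w, THEN conjunct1] by metis
    thus False using row_ends_same[of b E w] 2 assms(2) by (simp add: rowint_def)
  next
    case 3
    hence "b \<in> colseg E w" using pu_prop[OF B, of w, THEN conjunct1] by metis
    thus False using col_ends_same[of b E w] 3 assms(3) by (simp add: colint_def)
  next
    case 4
    hence "b \<in> colseg E w" using pd_prop[OF B, of w, THEN conjunct1] by metis
    thus False using col_ends_same[of b E w] 4 assms(3) by (simp add: colint_def)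
  qed
qed


lemma pair_swap:
  assumes M: "min_arborescence G W S T" and G: "G \<subseteq> W \<times> W" "S \<subseteq> W"
    and fin: "finite G" "finite S"
    and T1: "(Some a, Some b) \<in> T" and T2: "(Some c, Some b) \<in> T"
    and i2: "inverse_edge G (Some c, Some b)" and ca: "(c,a) \<in> G" and ac: "a \<noteq> c"
  shows False
proof -
  have A: "arborescence (ext_verts W) (ext_edges G S) T" using M by (simp add: min_arborescence_def)
  have nr: "(Some a, Some c) \<notin> T\<^sup>*"
  proof
    assume "(Some a, Some c) \<in> T\<^sup>*"
    hence "(Some a, Some c) \<in> T\<^sup>+" using ac by (meson option.inject rtranclD)
    then obtain m where m: "(Some a, m) \<in> T" "(m, Some c) \<in> T\<^sup>*" by (meson tranclD)
    have "m = Some b" using arb_fun[OF A G m(1) T1] .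
    hence "(Some b, Some b) \<in> T\<^sup>+" using m(2) T2 by auto
    thus False using arb_acyclic[OF A G] by blast
  qed
  show False
    apply (rule swap_false[OF M G fin T2 i2, of "Some a"])
    using ca nr by (auto simp: ext_edges_def inverse_edge_def)
qed

lemma step_swap:
  assumes M: "min_arborescence G W S T" and G: "G \<subseteq> W \<times> W" "S \<subseteq> W"
    and fin: "finite G" "finite S"
    and T1: "(Some a, Some b) \<in> T" and i1: "inverse_edge G (Some a, Some b)"
    and T2: "(Some b, Some w) \<in> T" and aw: "(a,w) \<in> G"
  shows False
proof -
  have A: "arborescence (ext_verts W) (ext_edges G S) T" using M by (simp add: min_arborescence_def)
  have nr: "(Some w, Some a) \<notin> T\<^sup>*"
  proof
    assume "(Some w, Some a) \<in> T\<^sup>*"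
    hence "(Some b, Some b) \<in> T\<^sup>+" using T1 T2
    proof -
      have "(Some w, Some b) \<in> T\<^sup>+" using \<open>(Some w, Some a) \<in> T\<^sup>*\<close> T1 by (rule rtrancl_into_trancl1)
      thus ?thesis using T2 by (meson trancl_into_trancl2)
    qed
    thus False using arb_acyclic[OF A G] by blast
  qed
  show False
    apply (rule swap_false[OF M G fin T1 i1, of "Some w"])
    using aw nr by (auto simp: ext_edges_def inverse_edge_def)
qed

lemma lt_sub: "large_tilt V E S \<subseteq> large_verts V E S \<times> large_verts V E S"
  by (auto simp: large_tilt_def)
lemma lt_full: "large_tilt V E S \<subseteq> full_tilt V E"
  by (auto simp: large_tilt_def)
lemma S_sub: "S \<subseteq> large_verts V E S"
  by (auto simp: large_verts_def large_base_def)
lemma full_fin: "board V E \<Longrightarrow> finite (full_tilt V E)"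
proof -
  assume B: "board V E"
  have "full_tilt V E \<subseteq> Sigma V (seg_ends E)" by (auto simp: full_tilt_def)
  moreover have "finite (Sigma V (seg_ends E))" using fin_board[OF B]
    by (auto simp: seg_ends_def)
  ultimately show ?thesis by (rule finite_subset)
qed
lemma lt_fin: "board V E \<Longrightarrow> finite (large_tilt V E S)"
  using full_fin lt_full finite_subset by metis

lemma segends_V: assumes B: "board V E" and bV: "b \<in> V" shows "seg_ends E b \<subseteq> V"
  using pl_prop[OF B, of b] pr_prop[OF B, of b] pu_prop[OF B, of b] pd_prop[OF B, of b]
    rowseg_sub[OF B, of b] colseg_sub[OF B, of b] bV
  by (auto simp: seg_ends_def)

lemma mixed:
  assumes B: "board V E" and SV: "S \<subseteq> V"
    and M: "min_arborescence (large_tilt V E S) (large_verts V E S) S T"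
    and ri: "rowint E b" and ci: "colint E b" and bV: "b \<in> V"
    and a: "a \<in> {pl E b, pr E b}" and c: "c \<in> {pu E b, pd E b}"
    and T1: "(Some a, Some b) \<in> T" and i1: "inverse_edge (large_tilt V E S) (Some a, Some b)"
    and T2: "(Some c, Some b) \<in> T" and i2: "inverse_edge (large_tilt V E S) (Some c, Some b)"
    and bW: "b \<in> large_verts V E S"
  shows "b \<in> S"
proof (rule ccontr)
  assume nS: "b \<notin> S"
  let ?G = "large_tilt V E S" and ?W = "large_verts V E S"
  have A: "arborescence (ext_verts ?W) (ext_edges ?G S) T" using M by (simp add: min_arborescence_def)
  have fin: "finite ?G" "finite S" using lt_fin[OF B] fin_board[OF B] SV finite_subset by auto
  have "Some b \<in> ext_verts ?W - {None}" using bW by (simp add: ext_verts_def)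
  then obtain w where bw: "(Some b, w) \<in> T" using A unfolding arborescence_def by blast
  hence "(Some b, w) \<in> ext_edges ?G S" using A by (auto simp: arborescence_def)
  then obtain w0 where w: "w = Some w0" and bw0: "(b,w0) \<in> ?G \<or> (w0,b) \<in> ?G"
    using nS by (auto simp: ext_edges_def)
  have "(w0,b) \<notin> ?G"
  proof
    assume "(w0,b) \<in> ?G"
    hence "b \<in> seg_ends E w0" using lt_full by (auto simp: full_tilt_def)
    thus False using lemC[OF B ri ci] by blast
  qed
  hence bw0G: "(b,w0) \<in> ?G" using bw0 by blast
  hence w0W: "w0 \<in> ?W" and "(b,w0) \<in> full_tilt V E" using lt_sub[of V E S] lt_full[of V E S] by auto
  hence w0s: "w0 \<in> seg_ends E b" "w0 \<noteq> b" by (auto simp: full_tilt_def)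
  have aW: "a \<in> ?W" and cW: "c \<in> ?W" using i1 i2 lt_sub by (auto simp: inverse_edge_def)
  have acyc: "x = Some b" if "(x, Some b) \<in> T" "(Some b, x) \<in> T" for x
  proof (rule ccontr)
    assume "x \<noteq> Some b"
    have "(Some b, Some b) \<in> T\<^sup>+" using that by auto
    thus False using arb_acyclic[OF A lt_sub S_sub] by blast
  qed
  have wa: "w0 \<noteq> a" using acyc[OF T1] bw w w0s(2) by auto
  have wc: "w0 \<noteq> c" using acyc[OF T2] bw w w0s(2) by auto
  show False
  proof (cases "w0 \<in> {pl E b, pr E b}")
    case True
    have "(a, w0) \<in> full_tilt V E" using lemB_row[OF B bV a True] wa by simp
    hence "(a,w0) \<in> ?G" using aW w0W by (simp add: large_tilt_def)
    thus False using step_swap[OF M lt_sub S_sub fin T1 i1] bw w by blast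
  next
    case False
    hence F: "w0 \<in> {pu E b, pd E b}" using w0s by (auto simp: seg_ends_def)
    have "(c, w0) \<in> full_tilt V E" using lemB_col[OF B bV c F] wc by simp
    hence "(c,w0) \<in> ?G" using cW w0W by (simp add: large_tilt_def)
    thus False using step_swap[OF M lt_sub S_sub fin T2 i2] bw w by blast
  qed
qed

theorem mainTheorem7:
  fixes V :: "pixel set" and E :: "pixel set set" and S :: "pixel set"
    and T :: "(pixel option \<times> pixel option) set"
    and p1 p2 q :: "pixel option"
  assumes "board V E"
    and "S \<subseteq> V"
    and "every_region_has_sink V E S"
    and "min_arborescence (large_tilt V E S) (large_verts V E S) S T"
    and "(p1, q) \<in> T" and "(p2, q) \<in> T" and "p1 \<noteq> p2"
    and "inverse_edge (large_tilt V E S) (p1, q)"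
    and "inverse_edge (large_tilt V E S) (p2, q)"
  shows "q \<in> Some ` S"
proof -
  note B = assms(1) and SV = assms(2) and M = assms(4)
  let ?G = "large_tilt V E S" and ?W = "large_verts V E S"
  have fin: "finite ?G" "finite S" using lt_fin[OF B] fin_board[OF B] SV finite_subset by auto
  obtain a b where ab: "p1 = Some a" "q = Some b" "(b,a) \<in> ?G" "(a,b) \<notin> ?G"
    using assms(8) by (auto simp: inverse_edge_def)
  obtain c where cb: "p2 = Some c" "(b,c) \<in> ?G" "(c,b) \<notin> ?G"
    using assms(9) ab(2) by (auto simp: inverse_edge_def)
  have ac: "a \<noteq> c" using assms(7) ab cb by auto
  have T1: "(Some a, Some b) \<in> T" and T2: "(Some c, Some b) \<in> T" using assms(5,6) ab cb by auto
  have i1: "inverse_edge ?G (Some a, Some b)" and i2: "inverse_edge ?G (Some c, Some b)"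
    using assms(8,9) ab cb by auto
  have aW: "a \<in> ?W" "b \<in> ?W" and cW: "c \<in> ?W" using ab cb lt_sub by auto
  have ba: "(b,a) \<in> full_tilt V E" and bc: "(b,c) \<in> full_tilt V E" using ab cb lt_full by auto
  have bV: "b \<in> V" using ba by (simp add: full_tilt_def)
  have aV: "a \<in> V" and cV: "c \<in> V" using ba bc segends_V[OF B bV] by (auto simp: full_tilt_def)
  have nab: "(a,b) \<notin> full_tilt V E" using ab aW by (auto simp: large_tilt_def)
  have ncb: "(c,b) \<notin> full_tilt V E" using cb aW cW by (auto simp: large_tilt_def)
  note LA = lemA[OF B ba aV nab] and LC = lemA[OF B bc cV ncb]
  have G1: "(x,y) \<in> ?G" if "(x,y) \<in> full_tilt V E" "x \<in> ?W" "y \<in> ?W" for x y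
    using that by (simp add: large_tilt_def)
  show ?thesis
  proof (cases "a \<in> {pl E b, pr E b} \<and> rowint E b")
    case True
    note Ta = True
    show ?thesis
    proof (cases "c \<in> {pl E b, pr E b} \<and> rowint E b")
      case True
      have "(c,a) \<in> ?G" using G1 lemB_row[OF B bV] Ta True ac aW cW by metis
      hence False using pair_swap[OF M lt_sub S_sub fin T1 T2 i2 _ ac] by blast
      thus ?thesis ..
    next
      case False
      hence "c \<in> {pu E b, pd E b} \<and> colint E b" using LC by blast
      hence "b \<in> S" using mixed[OF B SV M _ _ bV _ _ T1 i1 T2 i2 aW(2)] Ta by blast
      thus ?thesis using ab by auto
    qed
  next
    case False
    hence Fa: "a \<in> {pu E b, pd E b} \<and> colint E b" using LA by blast
    show ?thesis
    proof (cases "c \<in> {pl E b, pr E b} \<and> rowint E b")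
      case True
      hence "b \<in> S" using mixed[OF B SV M _ _ bV _ _ T2 i2 T1 i1 aW(2)] Fa by blast
      thus ?thesis using ab by auto
    next
      case False
      hence "c \<in> {pu E b, pd E b} \<and> colint E b" using LC by blast
      hence "(c,a) \<in> ?G" using G1 lemB_col[OF B bV] Fa ac aW cW by metis
      hence False using pair_swap[OF M lt_sub S_sub fin T1 T2 i2 _ ac] by blast
      thus ?thesis ..
    qed
  qed
qed

end
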